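(* Let $N\ge1$, $f:\mathbb{N}^N\to\mathbb{N}$, $p$ a prime, $n$ a nonnegative integer and $\mathbf{m}\in\mathbb{N}^N$. Define $g:\mathbb{N}^N\to\mathbb{N}$ by $g(\mathbf{x})=\binom{p}{p\mathbf{x}}_f$. Then $\binom{np}{p\mathbf{m}}_f\equiv\binom{n}{\mathbf{m}}_g\pmod{p^2}$.
   Context: $\mathbb{N}=\{0,1,2,\dots\}$. For a function $h:\mathbb{N}^N\to\mathbb{N}$, $k\ge0$ and $\mathbf{x}\in\mathbb{N}^N$, $\binom{k}{\mathbf{x}}_h=\sum_{\mathbf{m}_1+\cdots+\mathbf{m}_k=\mathbf{x}} h(\mathbf{m}_1)\cdots h(\mathbf{m}_k)$ over tuples of vectors in $\mathbb{N}^N$. *)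

theory Defs
  imports Main "HOL-Number_Theory.Cong"
begin

text \<open>Vectors in N^N are modelled as functions 'n \<Rightarrow> nat for a finite (nonempty)
index type 'n, so N = CARD('n) \<ge> 1.  The generalized multinomial coefficient
binom_h h k x is the sum over all k-tuples (m_1,...,m_k) of vectors (lists of
length k) with m_1 + ... + m_k = x of the product h(m_1) ... h(m_k).\<close>

definition gbinom :: "(('n::finite \<Rightarrow> nat) \<Rightarrow> nat) \<Rightarrow> nat \<Rightarrow> ('n \<Rightarrow> nat) \<Rightarrow> nat" where
  "gbinom h k x =
     (\<Sum>ms \<in> {ms :: ('n \<Rightarrow> nat) list. length ms = k \<and> (\<forall>j. (\<Sum>m\<leftarrow>ms. m j) = x j)}.
        (\<Prod>m\<leftarrow>ms. h m))"

end

theory Submission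
  imports Defs
begin

definition LS :: "nat \<Rightarrow> ('n::finite \<Rightarrow> nat) \<Rightarrow> ('n \<Rightarrow> nat) list set" where
  "LS k x = {ms. length ms = k \<and> (\<forall>j. (\<Sum>m\<leftarrow>ms. m j) = x j)}"

definition Box :: "('n::finite \<Rightarrow> nat) \<Rightarrow> ('n \<Rightarrow> nat) set" where
  "Box x = {y. \<forall>j. y j \<le> x j}"

lemma gbinom_LS: "gbinom h k x = (\<Sum>ms\<in>LS k x. \<Prod>m\<leftarrow>ms. h m)"
  by (simp add: gbinom_def LS_def)

lemma finite_Box: "finite (Box (x::'n::finite \<Rightarrow> nat))"
proof -
  have "Box x \<subseteq> {f. \<forall>j. (j \<in> UNIV \<longrightarrow> f j \<in> {..Max (range x)}) \<and> (j \<notin> UNIV \<longrightarrow> f j = 0)}"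
  proof
    fix y assume "y \<in> Box x"
    then have "\<And>j. y j \<le> x j" by (simp add: Box_def)
    moreover have "\<And>j. x j \<le> Max (range x)" by (rule Max_ge) auto
    ultimately have "\<And>j. y j \<le> Max (range x)" using order_trans by blast
    then show "y \<in> {f. \<forall>j. (j \<in> UNIV \<longrightarrow> f j \<in> {..Max (range x)}) \<and> (j \<notin> UNIV \<longrightarrow> f j = 0)}"
      by simp
  qed
  moreover have "finite {f. \<forall>j. (j \<in> (UNIV::'n set) \<longrightarrow> f j \<in> {..Max (range x)}) \<and> (j \<notin> UNIV \<longrightarrow> f j = (0::nat))}"
    by (rule finite_set_of_finite_funs) auto
  ultimately show ?thesis by (rule finite_subset)
qed

lemma finite_LS: "finite (LS k x)"
proof -
  have "LS k x \<subseteq> {ms. set ms \<subseteq> Box x \<and> length ms = k}"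
  proof
    fix ms assume "ms \<in> LS k x"
    then have l: "length ms = k" and s: "\<And>j. (\<Sum>m\<leftarrow>ms. m j) = x j" by (auto simp: LS_def)
    have "set ms \<subseteq> Box x"
    proof
      fix m assume "m \<in> set ms"
      then have "\<And>j. m j \<le> (\<Sum>m\<leftarrow>ms. m j)"
        by (intro member_le_sum_list) auto
      then show "m \<in> Box x" using s by (simp add: Box_def)
    qed
    then show "ms \<in> {ms. set ms \<subseteq> Box x \<and> length ms = k}" using l by simp
  qed
  moreover have "finite {ms. set ms \<subseteq> Box x \<and> length ms = k}"
    by (rule finite_lists_length_eq[OF finite_Box])
  ultimately show ?thesis by (rule finite_subset)
qed

lemma gbinom_add:
  "gbinom h (a+b) x = (\<Sum>y\<in>Box x. gbinom h a y * gbinom h b (\<lambda>j. x j - y j))"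
proof -
  define W where "W = (\<lambda>ms. \<Prod>m\<leftarrow>ms. h m)"
  have "(\<Sum>y\<in>Box x. gbinom h a y * gbinom h b (\<lambda>j. x j - y j))
     = (\<Sum>y\<in>Box x. \<Sum>q\<in>LS a y \<times> LS b (\<lambda>j. x j - y j). W (fst q) * W (snd q))"
    by (simp add: gbinom_LS W_def sum_product sum.cartesian_product case_prod_beta)
  also have "\<dots> = (\<Sum>z\<in>Sigma (Box x) (\<lambda>y. LS a y \<times> LS b (\<lambda>j. x j - y j)).
                     W (fst (snd z)) * W (snd (snd z)))"
    by (subst sum.Sigma) (auto simp: finite_Box finite_LS case_prod_beta)
  also have "\<dots> = (\<Sum>ms\<in>LS (a+b) x. W ms)"
  proof (rule sum.reindex_bij_witness[where i = "\<lambda>ms. ((\<lambda>j. \<Sum>m\<leftarrow>take a ms. m j), (take a ms, drop a ms))"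
        and j = "\<lambda>z. fst (snd z) @ snd (snd z)"])
    fix z assume "z \<in> Sigma (Box x) (\<lambda>y. LS a y \<times> LS b (\<lambda>j. x j - y j))"
    then obtain y as bs where z: "z = (y, as, bs)" and y: "y \<in> Box x" and as: "as \<in> LS a y"
      and bs: "bs \<in> LS b (\<lambda>j. x j - y j)" by auto
    show "((\<lambda>j. \<Sum>m\<leftarrow>take a (fst (snd z) @ snd (snd z)). m j),
          take a (fst (snd z) @ snd (snd z)), drop a (fst (snd z) @ snd (snd z))) = z"
    proof -
      have la: "length as = a" and sa: "\<And>j. (\<Sum>m\<leftarrow>as. m j) = y j" using as by (auto simp: LS_def)
      show ?thesis using z la by (simp add: fun_eq_iff sa)
    qed
    show "fst (snd z) @ snd (snd z) \<in> LS (a + b) x"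
    proof -
      have la: "length as = a" and sa: "\<And>j. (\<Sum>m\<leftarrow>as. m j) = y j" using as by (auto simp: LS_def)
      have lb: "length bs = b" and sb: "\<And>j. (\<Sum>m\<leftarrow>bs. m j) = x j - y j" using bs by (auto simp: LS_def)
      have yx: "\<And>j. y j \<le> x j" using y by (simp add: Box_def)
      show ?thesis using z la lb unfolding LS_def
        by (simp add: sa sb yx)
    qed
    show "W (fst (snd z) @ snd (snd z)) = W (fst (snd z)) * W (snd (snd z))"
      by (simp add: W_def)
  next
    fix ms assume ms: "ms \<in> LS (a+b) x"
    show "fst (snd ((\<lambda>j. \<Sum>m\<leftarrow>take a ms. m j), take a ms, drop a ms)) @
          snd (snd ((\<lambda>j. \<Sum>m\<leftarrow>take a ms. m j), take a ms, drop a ms)) = ms" by simp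
    have e: "\<And>j. (\<Sum>m\<leftarrow>take a ms. m j) + (\<Sum>m\<leftarrow>drop a ms. m j) = x j"
    proof -
      fix j
      have "(\<Sum>m\<leftarrow>take a ms @ drop a ms. m j) = x j" using ms by (simp add: LS_def)
      then show "(\<Sum>m\<leftarrow>take a ms. m j) + (\<Sum>m\<leftarrow>drop a ms. m j) = x j"
        by (simp only: map_append sum_list_append)
    qed
    have l: "length ms = a + b" using ms by (simp add: LS_def)
    show "((\<lambda>j. \<Sum>m\<leftarrow>take a ms. m j), take a ms, drop a ms)
          \<in> Sigma (Box x) (\<lambda>y. LS a y \<times> LS b (\<lambda>j. x j - y j))"
    proof (simp, intro conjI)
      show "(\<lambda>j. \<Sum>m\<leftarrow>take a ms. m j) \<in> Box x"
        unfolding Box_def mem_Collect_eq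
      proof
        fix j show "(\<Sum>m\<leftarrow>take a ms. m j) \<le> x j" using e[of j] by linarith
      qed
      show "take a ms \<in> LS a (\<lambda>j. \<Sum>m\<leftarrow>take a ms. m j)" using l by (simp add: LS_def)
      show "drop a ms \<in> LS b (\<lambda>j. x j - (\<Sum>m\<leftarrow>take a ms. m j))"
      proof -
        have e2: "\<And>j. (\<Sum>m\<leftarrow>drop a ms. m j) = x j - (\<Sum>m\<leftarrow>take a ms. m j)"
          using e by (metis add_diff_cancel_left')
        show ?thesis using l by (simp add: LS_def e2)
      qed
    qed
  qed
  finally show ?thesis by (simp add: gbinom_LS W_def)
qed

lemma LS_1: "LS (Suc 0) y = {[y]}"
  by (auto simp: LS_def length_Suc_conv)

lemma gbinom_1: "gbinom h (Suc 0) y = h y"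
  by (simp add: gbinom_LS LS_1)

lemma gbinom_block: "gbinom f (n*p) x = gbinom (gbinom f p) n x"
proof (induction n arbitrary: x)
  case 0
  then show ?case by (simp add: gbinom_def)
next
  case (Suc n)
  have "gbinom f (Suc n * p) x = gbinom f (p + n*p) x" by simp
  also have "\<dots> = (\<Sum>y\<in>Box x. gbinom f p y * gbinom f (n*p) (\<lambda>j. x j - y j))"
    by (rule gbinom_add)
  also have "\<dots> = (\<Sum>y\<in>Box x. gbinom (gbinom f p) (Suc 0) y * gbinom (gbinom f p) n (\<lambda>j. x j - y j))"
    by (simp add: Suc.IH gbinom_1)
  also have "\<dots> = gbinom (gbinom f p) (Suc 0 + n) x"
    by (rule gbinom_add[symmetric])
  finally show ?case by simp
qed

lemma funpow_fix_mult:
  assumes "(\<sigma> ^^ d) z = z" shows "(\<sigma> ^^ (d*k)) z = z"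
proof (induction k)
  case 0 then show ?case by simp
next
  case (Suc k)
  have "(\<sigma> ^^ (d * Suc k)) z = (\<sigma> ^^ d) ((\<sigma> ^^ (d*k)) z)"
    by (simp add: funpow_add)
  then show ?case using Suc assms by simp
qed

lemma funpow_mod:
  assumes "(\<sigma> ^^ p) z = z" shows "(\<sigma> ^^ m) z = (\<sigma> ^^ (m mod p)) z"
proof -
  have "m = m mod p + p * (m div p)" by simp
  then have "(\<sigma> ^^ m) z = (\<sigma> ^^ (m mod p)) ((\<sigma> ^^ (p * (m div p))) z)"
    by (metis comp_apply funpow_add)
  then show ?thesis using funpow_fix_mult[OF assms] by simp
qed

lemma funpow_closed:
  assumes "\<And>x. x \<in> S \<Longrightarrow> \<sigma> x \<in> S" "z \<in> S" shows "(\<sigma> ^^ k) z \<in> S"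
  by (induction k) (auto intro: assms)

lemma funpow_inv:
  assumes "\<And>x. x \<in> S \<Longrightarrow> \<sigma> x \<in> S" "\<And>x. x \<in> S \<Longrightarrow> w (\<sigma> x) = w x" "z \<in> S"
  shows "w ((\<sigma> ^^ k) z) = w z"
proof (induction k)
  case 0 then show ?case by simp
next
  case (Suc k)
  have "(\<sigma> ^^ k) z \<in> S" by (rule funpow_closed[OF assms(1) assms(3)])
  then show ?case using Suc assms(2) by simp
qed

lemma no_short_period:
  assumes p: "prime p" and pz: "(\<sigma> ^^ p) z = z" and dz: "(\<sigma> ^^ d) z = z"
    and d: "0 < d" "d < p" and nf: "\<sigma> z \<noteq> z"
  shows False
proof -
  have "coprime d p"
    using p d by (metis coprime_commute dvd_imp_le not_less prime_imp_coprime)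
  then obtain k where k: "[d * k = Suc 0] (mod p)" using cong_solve_coprime_nat by blast
  have p1: "p > 1" using p prime_gt_1_nat by blast
  then have "d * k mod p = 1" using k by (simp add: cong_def)
  then have dk: "d * k = 1 + p * (d * k div p)"
    by (metis add.commute div_mod_decomp mult.commute)
  have "(\<sigma> ^^ (d*k)) z = z" by (rule funpow_fix_mult[OF dz])
  also have "(\<sigma> ^^ (d*k)) z = \<sigma> ((\<sigma> ^^ (p * (d * k div p))) z)"
    by (subst dk) (simp add: funpow_add)
  also have "(\<sigma> ^^ (p * (d * k div p))) z = z" by (rule funpow_fix_mult[OF pz])
  finally show False using nf by simp
qed

lemma orbit_dvd:
  fixes w :: "'a \<Rightarrow> nat"
  assumes "finite S" "prime p" "\<And>x. x \<in> S \<Longrightarrow> \<sigma> x \<in> S"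
    "\<And>x. x \<in> S \<Longrightarrow> (\<sigma> ^^ p) x = x" "\<And>x. x \<in> S \<Longrightarrow> \<sigma> x \<noteq> x"
    "\<And>x. x \<in> S \<Longrightarrow> w (\<sigma> x) = w x"
  shows "p dvd sum w S"
  using assms
proof (induction "card S" arbitrary: S rule: less_induct)
  case less
  have P1: "finite S" by fact
  have P2: "prime p" by fact
  have P3: "\<And>x. x \<in> S \<Longrightarrow> \<sigma> x \<in> S" by fact
  have P4: "\<And>x. x \<in> S \<Longrightarrow> (\<sigma> ^^ p) x = x" by fact
  have P5: "\<And>x. x \<in> S \<Longrightarrow> \<sigma> x \<noteq> x" by fact
  have P6: "\<And>x. x \<in> S \<Longrightarrow> w (\<sigma> x) = w x" by fact
  show ?case
  proof (cases "S = {}")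
    case True then show ?thesis by simp
  next
    case False
    then obtain x where x: "x \<in> S" by blast
    define Orb where "Orb = (\<lambda>k. (\<sigma> ^^ k) x) ` {..<p}"
    have OS: "Orb \<subseteq> S" unfolding Orb_def using funpow_closed[where S=S and \<sigma>=\<sigma>, OF P3 x] by auto
    have inj: "inj_on (\<lambda>k. (\<sigma> ^^ k) x) {..<p}"
    proof (rule inj_onI, rule ccontr)
      fix i j assume i: "i \<in> {..<p}" and j: "j \<in> {..<p}" and e: "(\<sigma> ^^ i) x = (\<sigma> ^^ j) x" and ne: "i \<noteq> j"
      have gen: "False" if ab: "a < b" "b < p" "(\<sigma> ^^ a) x = (\<sigma> ^^ b) x" for a b
      proof -
        define z where "z = (\<sigma> ^^ a) x"
        have zS: "z \<in> S" unfolding z_def by (rule funpow_closed[where S=S and \<sigma>=\<sigma>, OF P3 x])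
        have "(\<sigma> ^^ (b - a)) z = (\<sigma> ^^ (b - a + a)) x" unfolding z_def by (simp add: funpow_add)
        also have "b - a + a = b" using ab by simp
        finally have "(\<sigma> ^^ (b - a)) z = z" using ab unfolding z_def by simp
        then show False by (rule no_short_period[OF P2 P4[OF zS] _ _ _ P5[OF zS]]) (use ab in auto)
      qed
      show False
      proof (cases "i < j")
        case True then show False using gen[of i j] j e by simp
      next
        case False then have "j < i" using ne by simp
        then show False using gen[of j i] i e by simp
      qed
    qed
    have cO: "card Orb = p" unfolding Orb_def using inj by (simp add: card_image)
    have wO: "sum w Orb = p * w x"
    proof -
      have "sum w Orb = (\<Sum>y\<in>Orb. w x)"
        unfolding Orb_def using funpow_inv[where S=S and \<sigma>=\<sigma> and w=w, OF P3 P6 x] by (intro sum.cong) auto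
      then show ?thesis using cO by simp
    qed
    have Omem: "(\<sigma> ^^ m) x \<in> Orb" for m
    proof -
      have "(\<sigma> ^^ m) x = (\<sigma> ^^ (m mod p)) x" by (rule funpow_mod[OF P4[OF x]])
      moreover have "m mod p < p" using prime_gt_0_nat[OF P2] by (rule mod_less_divisor)
      ultimately show ?thesis unfolding Orb_def by blast
    qed
    have p1: "p > 0" by (rule prime_gt_0_nat[OF P2])
    have cl: "\<sigma> y \<in> S - Orb" if y: "y \<in> S - Orb" for y
    proof (rule ccontr)
      assume "\<sigma> y \<notin> S - Orb"
      then have "\<sigma> y \<in> Orb" using y P3 by blast
      then obtain k where k: "\<sigma> y = (\<sigma> ^^ k) x" unfolding Orb_def by blast
      have "y = (\<sigma> ^^ (p - 1 + 1)) y" using p1 P4 y by simp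
      also have "\<dots> = (\<sigma> ^^ (p - 1)) (\<sigma> y)" by (simp only: Suc_eq_plus1[symmetric] funpow_Suc_right o_apply)
      also have "\<dots> = (\<sigma> ^^ (p - 1 + k)) x" by (simp only: k funpow_add o_apply)
      finally have "y \<in> Orb" using Omem[of "p - 1 + k"] by (simp only:)
      then show False using y by blast
    qed
    have xO: "x \<in> Orb" using Omem[of 0] by simp
    have cS: "card (S - Orb) < card S"
    proof (rule psubset_card_mono[OF P1])
      show "S - Orb \<subset> S" using x xO by blast
    qed
    have "p dvd sum w (S - Orb)"
    proof (rule less.hyps[OF cS])
      show "finite (S - Orb)" using P1 by simp
      show "prime p" by (rule P2)
      show "\<And>x. x \<in> S - Orb \<Longrightarrow> \<sigma> x \<in> S - Orb" by (rule cl)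
      show "\<And>x. x \<in> S - Orb \<Longrightarrow> (\<sigma> ^^ p) x = x" using P4 by blast
      show "\<And>x. x \<in> S - Orb \<Longrightarrow> \<sigma> x \<noteq> x" using P5 by blast
      show "\<And>x. x \<in> S - Orb \<Longrightarrow> w (\<sigma> x) = w x" using P6 by blast
    qed
    moreover have "sum w S = sum w Orb + sum w (S - Orb)"
      using OS P1 by (simp add: sum.subset_diff)
    ultimately show ?thesis using wO by simp
  qed
qed

lemma sum_list_rotate1: "sum_list (map g (rotate1 xs)) = sum_list (map (g::'a \<Rightarrow> nat) xs)"
  by (cases xs) (simp_all add: add.commute)

lemma prod_list_rotate1: "prod_list (map g (rotate1 xs)) = prod_list (map (g::'a \<Rightarrow> nat) xs)"
  by (cases xs) (simp_all add: mult.commute)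

definition ND :: "nat \<Rightarrow> ('n::finite \<Rightarrow> nat) \<Rightarrow> bool" where
  "ND p y = (\<exists>j. \<not> p dvd y j)"

lemma B_dvd:
  assumes p: "prime p" and nd: "ND p y"
  shows "p dvd gbinom f p y"
proof -
  have p0: "p > 0" using p prime_gt_0_nat by blast
  have "p dvd (\<Sum>ms\<in>LS p y. \<Prod>m\<leftarrow>ms. f m)"
  proof (rule orbit_dvd[where \<sigma> = rotate1])
    show "finite (LS p y)" by (rule finite_LS)
    show "prime p" by (rule p)
    show "rotate1 x \<in> LS p y" if "x \<in> LS p y" for x
      using that by (simp add: LS_def sum_list_rotate1)
    show "(rotate1 ^^ p) x = x" if "x \<in> LS p y" for x
    proof -
      have "length x = p" using that by (simp add: LS_def)
      then have "rotate p x = x" by simp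
      then show ?thesis by (simp add: rotate_def)
    qed
    show "rotate1 x \<noteq> x" if x: "x \<in> LS p y" for x
    proof
      assume r: "rotate1 x = x"
      have l: "length x = p" and sx: "\<And>j. (\<Sum>m\<leftarrow>x. m j) = y j" using x by (auto simp: LS_def)
      have "x \<noteq> []" using l p0 by auto
      then have "card (set x) = 1" using rotate1_fixpoint_card[OF r] by simp
      then obtain c where c: "set x = {c}" by (rule card_1_singletonE)
      have "x = replicate p c" by (rule replicate_eqI) (use l c in auto)
      then have "\<And>j. y j = p * c j" using sx by (simp add: sum_list_replicate)
      then show False using nd by (simp add: ND_def)
    qed
    show "(\<Prod>m\<leftarrow>rotate1 x. f m) = (\<Prod>m\<leftarrow>x. f m)" for x
      by (rule prod_list_rotate1)
  qed
  then show ?thesis by (simp add: gbinom_LS)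
qed

lemma pow_dvd_prod:
  assumes "\<And>y. ND p y \<Longrightarrow> p dvd B y"
  shows "p ^ min 2 (length (filter (ND p) ys)) dvd prod_list (map B ys)"
proof (induction ys)
  case Nil then show ?case by simp
next
  case (Cons y ys)
  show ?case
  proof (cases "ND p y")
    case True
    have "p ^ min 2 (length (filter (ND p) (y # ys))) dvd p * p ^ min 2 (length (filter (ND p) ys))"
    proof -
      have "min 2 (length (filter (ND p) (y # ys))) \<le> Suc (min 2 (length (filter (ND p) ys)))"
        using True by simp
      then have "p ^ min 2 (length (filter (ND p) (y # ys))) dvd p ^ Suc (min 2 (length (filter (ND p) ys)))"
        by (rule le_imp_power_dvd)
      then show ?thesis by simp
    qed
    also have "\<dots> dvd B y * prod_list (map B ys)"
      by (rule mult_dvd_mono[OF assms[OF True] Cons.IH])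
    finally show ?thesis by simp
  next
    case False
    then show ?thesis using Cons.IH by simp
  qed
qed

lemma dvd_sum_list_nat:
  "(\<And>z. z \<in> set xs \<Longrightarrow> (p::nat) dvd g z) \<Longrightarrow> p dvd sum_list (map g xs)"
  by (induction xs) auto

lemma nd_one:
  assumes "length (filter (ND p) ys) = 1"
  shows "\<exists>j. \<not> p dvd (\<Sum>y\<leftarrow>ys. y j)"
  using assms
proof (induction ys)
  case Nil then show ?case by simp
next
  case (Cons y ys)
  show ?case
  proof (cases "ND p y")
    case True
    then have "filter (ND p) ys = []" using Cons.prems by simp
    then have all: "\<And>z. z \<in> set ys \<Longrightarrow> \<not> ND p z" by (simp add: filter_empty_conv)
    obtain j where j: "\<not> p dvd y j" using True by (auto simp: ND_def)
    have "p dvd (\<Sum>z\<leftarrow>ys. z j)"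
      by (rule dvd_sum_list_nat) (use all in \<open>auto simp: ND_def\<close>)
    then have "\<not> p dvd (\<Sum>z\<leftarrow>y # ys. z j)" using j by (simp add: dvd_add_left_iff)
    then show ?thesis by blast
  next
    case False
    then have "length (filter (ND p) ys) = 1" using Cons.prems by simp
    then obtain j where j: "\<not> p dvd (\<Sum>z\<leftarrow>ys. z j)" using Cons.IH by blast
    have "p dvd y j" using False by (simp add: ND_def)
    then have "\<not> p dvd (\<Sum>z\<leftarrow>y # ys. z j)" using j by (simp add: dvd_add_right_iff)
    then show ?thesis by blast
  qed
qed

theorem theorem7:
  fixes f :: "('n::finite \<Rightarrow> nat) \<Rightarrow> nat"
    and p n :: nat
    and m :: "'n \<Rightarrow> nat"
    and g :: "('n \<Rightarrow> nat) \<Rightarrow> nat"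
  assumes "prime p"
    and "\<And>x. g x = gbinom f p (\<lambda>j. p * x j)"
  shows "[gbinom f (n * p) (\<lambda>j. p * m j) = gbinom g n m] (mod p^2)"
proof -
  note p = assms(1)
  have p0: "p > 0" using p prime_gt_0_nat by blast
  define B where "B = gbinom f p"
  define pm where "pm = (\<lambda>j. p * m j)"
  define A where "A = {ys \<in> LS n pm. \<forall>y\<in>set ys. \<not> ND p y}"
  define C where "C = LS n pm - A"
  have fin: "finite (LS n pm)" by (rule finite_LS)
  have AS: "A \<subseteq> LS n pm" unfolding A_def by blast
  have "gbinom f (n * p) pm = gbinom B n pm" unfolding B_def by (rule gbinom_block)
  also have "\<dots> = (\<Sum>ys\<in>A. \<Prod>y\<leftarrow>ys. B y) + (\<Sum>ys\<in>C. \<Prod>y\<leftarrow>ys. B y)"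
    unfolding gbinom_LS C_def using fin AS by (simp add: sum.subset_diff)
  finally have split: "gbinom f (n * p) pm = (\<Sum>ys\<in>A. \<Prod>y\<leftarrow>ys. B y) + (\<Sum>ys\<in>C. \<Prod>y\<leftarrow>ys. B y)" .
  have BND: "\<And>y. ND p y \<Longrightarrow> p dvd B y" unfolding B_def by (rule B_dvd[OF p])
  have Cdvd: "p^2 dvd (\<Sum>ys\<in>C. \<Prod>y\<leftarrow>ys. B y)"
  proof (rule dvd_sum)
    fix ys assume ys: "ys \<in> C"
    then have ysL: "ys \<in> LS n pm" and nA: "ys \<notin> A" by (auto simp: C_def)
    have sums: "\<And>j. (\<Sum>y\<leftarrow>ys. y j) = p * m j" using ysL by (simp add: LS_def pm_def)
    have "length (filter (ND p) ys) \<noteq> 0"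
    proof
      assume "length (filter (ND p) ys) = 0"
      then have "\<forall>y\<in>set ys. \<not> ND p y" by (simp add: filter_empty_conv)
      then show False using nA ysL by (simp add: A_def)
    qed
    moreover have "length (filter (ND p) ys) \<noteq> 1"
    proof
      assume "length (filter (ND p) ys) = 1"
      then obtain j where "\<not> p dvd (\<Sum>y\<leftarrow>ys. y j)" using nd_one by blast
      then show False using sums by simp
    qed
    ultimately have "2 \<le> length (filter (ND p) ys)" by linarith
    then have "min 2 (length (filter (ND p) ys)) = 2" by (rule min_absorb1)
    then show "p^2 dvd (\<Prod>y\<leftarrow>ys. B y)" using pow_dvd_prod[of p B ys, OF BND] by simp
  qed
  have Aeq: "(\<Sum>ys\<in>A. \<Prod>y\<leftarrow>ys. B y) = gbinom g n m"
  proof -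
    have "(\<Sum>ys\<in>A. \<Prod>y\<leftarrow>ys. B y) = (\<Sum>zs\<in>LS n m. \<Prod>z\<leftarrow>zs. g z)"
    proof (rule sum.reindex_bij_witness[where i = "map (\<lambda>z j. p * z j)" and j = "map (\<lambda>y j. y j div p)"])
      fix ys assume ys: "ys \<in> A"
      then have dv: "\<And>y j. y \<in> set ys \<Longrightarrow> p dvd y j" by (auto simp: A_def ND_def)
      have eq: "map (\<lambda>z j. p * z j) (map (\<lambda>y j. y j div p) ys) = ys"
      proof -
        have "map (\<lambda>z j. p * z j) (map (\<lambda>y j. y j div p) ys) = map (\<lambda>x. x) ys"
          unfolding map_map o_def
          by (rule map_cong) (use dv in \<open>auto simp: fun_eq_iff\<close>)
        then show ?thesis by simp
      qed
      show "map (\<lambda>z j. p * z j) (map (\<lambda>y j. y j div p) ys) = ys" by (rule eq)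
      have l: "length ys = n" and s: "\<And>j. (\<Sum>y\<leftarrow>ys. y j) = p * m j" using ys by (auto simp: A_def LS_def pm_def)
      have s2: "(\<Sum>z\<leftarrow>map (\<lambda>y j. y j div p) ys. z j) = m j" for j
      proof -
        have "p * (\<Sum>z\<leftarrow>map (\<lambda>y j. y j div p) ys. z j) = (\<Sum>z\<leftarrow>map (\<lambda>y j. y j div p) ys. p * z j)"
          by (simp only: sum_list_const_mult)
        also have "\<dots> = (\<Sum>y\<leftarrow>map (\<lambda>z j. p * z j) (map (\<lambda>y j. y j div p) ys). y j)"
          by (simp only: map_map o_def)
        also have "\<dots> = p * m j" using eq s by simp
        finally show ?thesis using p0 by simp
      qed
      show "map (\<lambda>y j. y j div p) ys \<in> LS n m"
        unfolding LS_def using l s2 by simp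
      have "(\<Prod>z\<leftarrow>map (\<lambda>y j. y j div p) ys. g z)
          = (\<Prod>y\<leftarrow>map (\<lambda>z j. p * z j) (map (\<lambda>y j. y j div p) ys). B y)"
        by (simp only: map_map o_def assms(2) B_def)
      then show "(\<Prod>z\<leftarrow>map (\<lambda>y j. y j div p) ys. g z) = (\<Prod>y\<leftarrow>ys. B y)"
        by (simp only: eq)
    next
      fix zs assume zs: "zs \<in> LS n m"
      then have l: "length zs = n" and s: "\<And>j. (\<Sum>z\<leftarrow>zs. z j) = m j" by (auto simp: LS_def)
      show "map (\<lambda>y j. y j div p) (map (\<lambda>z j. p * z j) zs) = zs"
        using p0 by (simp add: o_def)
      have s3: "(\<Sum>y\<leftarrow>map (\<lambda>z j. p * z j) zs. y j) = p * m j" for j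
      proof -
        have "(\<Sum>y\<leftarrow>map (\<lambda>z j. p * z j) zs. y j) = (\<Sum>z\<leftarrow>zs. p * z j)"
          by (simp only: map_map o_def)
        also have "\<dots> = p * m j" by (simp only: sum_list_const_mult s)
        finally show ?thesis .
      qed
      show "map (\<lambda>z j. p * z j) zs \<in> A"
        unfolding A_def LS_def pm_def using l s3 by (auto simp: ND_def)
    qed
    then show ?thesis by (simp add: gbinom_LS)
  qed
  obtain t where t: "(\<Sum>ys\<in>C. \<Prod>y\<leftarrow>ys. B y) = p^2 * t" using Cdvd by blast
  have "gbinom f (n * p) pm = gbinom g n m + p^2 * t" using split Aeq t by simp
  then show ?thesis unfolding pm_def cong_def by simp
qed

end
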